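(* Let $E$ be an elliptic curve over $\mathbb{R}$, $P_1,\ldots,P_n\in E(\mathbb{R})$ linearly independent, with attached $q$ and $u_1,\ldots,u_n$ (normalized so that $q<|u_i|<1$ if $q>0$ and $q^2<u_i<1$ if $q<0$), and suppose $u_1,\ldots,u_k<0$, $u_{k+1},\ldots,u_n>0$ for some $0\le k\le n$. Then $\theta(u_i,q)>0$ for every $i$.
   Context: $\theta(x,q)=(1-x)\prod_{m\ge1}\frac{(1-q^mx)(1-q^mx^{-1})}{(1-q^m)^2}$ for real $x\notin q^{\mathbb{Z}}$, $0<|q|<1$. Tate parametrization: for $E/\mathbb{R}$ there is a unique real $q$, $0<|q|<1$, and an $\mathbb{R}$-analytic group isomorphism $\psi:\mathbb{R}^*/q^{\mathbb{Z}}\to E(\mathbb{R})$ (restriction of an isomorphism $\mathbb{C}^*/q^{\mathbb{Z}}\to E(\mathbb{C})$ commuting with conjugation, from Tate's uniformization of $E_q\cong_{\mathbb{R}}E$); $u_i\in\mathbb{R}^*$ is the normalized representative of $\psi^{-1}(P_i)$. *)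

theory Defs
  imports "HOL-Analysis.Analysis"
begin

definition theta :: "real \<Rightarrow> real \<Rightarrow> real" where
  "theta x q = (1 - x) *
     (\<Prod>m. (1 - q ^ (Suc m) * x) * (1 - q ^ (Suc m) / x) / (1 - q ^ (Suc m))\<^sup>2)"

text \<open>Elliptic curves over R in short Weierstrass form y^2 = x^3 + a x + b
  (every elliptic curve over R is R-isomorphic to one of these).
  A point is None (the point at infinity O) or Some (x,y).\<close>
type_synonym ec_point = "(real \<times> real) option"

definition ec_nonsingular :: "real \<Rightarrow> real \<Rightarrow> bool" where
  "ec_nonsingular a b \<longleftrightarrow> 4 * a ^ 3 + 27 * b ^ 2 \<noteq> 0"

definition on_curve :: "real \<Rightarrow> real \<Rightarrow> ec_point \<Rightarrow> bool" where
  "on_curve a b P = (case P of None \<Rightarrow> True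
                    | Some (x, y) \<Rightarrow> y ^ 2 = x ^ 3 + a * x + b)"

definition ec_neg :: "ec_point \<Rightarrow> ec_point" where
  "ec_neg P = (case P of None \<Rightarrow> None | Some (x, y) \<Rightarrow> Some (x, - y))"

definition ec_add :: "real \<Rightarrow> ec_point \<Rightarrow> ec_point \<Rightarrow> ec_point" where
  "ec_add a P Q = (case P of None \<Rightarrow> Q | Some (x1, y1) \<Rightarrow>
     (case Q of None \<Rightarrow> P | Some (x2, y2) \<Rightarrow>
       (if x1 = x2 \<and> y1 = - y2 then None
        else let l = (if x1 = x2 then (3 * x1 ^ 2 + a) / (2 * y1)
                      else (y2 - y1) / (x2 - x1));
                 x3 = l ^ 2 - x1 - x2;
                 y3 = l * (x1 - x3) - y1
             in Some (x3, y3))))"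

fun ec_nsmul :: "real \<Rightarrow> nat \<Rightarrow> ec_point \<Rightarrow> ec_point" where
  "ec_nsmul a 0 P = None"
| "ec_nsmul a (Suc n) P = ec_add a P (ec_nsmul a n P)"

definition ec_zsmul :: "real \<Rightarrow> int \<Rightarrow> ec_point \<Rightarrow> ec_point" where
  "ec_zsmul a c P = (if c \<ge> 0 then ec_nsmul a (nat c) P
                     else ec_neg (ec_nsmul a (nat (- c)) P))"

fun ec_lincomb :: "real \<Rightarrow> (nat \<Rightarrow> int) \<Rightarrow> (nat \<Rightarrow> ec_point) \<Rightarrow> nat \<Rightarrow> ec_point" where
  "ec_lincomb a c P 0 = None"
| "ec_lincomb a c P (Suc n) = ec_add a (ec_lincomb a c P n) (ec_zsmul a (c n) (P n))"

definition ec_lin_indep :: "real \<Rightarrow> (nat \<Rightarrow> ec_point) \<Rightarrow> nat \<Rightarrow> bool" where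
  "ec_lin_indep a P n \<longleftrightarrow>
     (\<forall>c :: nat \<Rightarrow> int. ec_lincomb a c P n = None \<longrightarrow> (\<forall>i<n. c i = 0))"

text \<open>psi : R^*/q^Z \<rightarrow> E(R) a group isomorphism, represented as a map on R^*
  that is a homomorphism, onto E(R), with fibres exactly the cosets of q^Z.\<close>
definition tate_iso :: "real \<Rightarrow> real \<Rightarrow> real \<Rightarrow> (real \<Rightarrow> ec_point) \<Rightarrow> bool" where
  "tate_iso a b q psi \<longleftrightarrow>
     (\<forall>x. x \<noteq> 0 \<longrightarrow> on_curve a b (psi x)) \<and>
     (\<forall>x y. x \<noteq> 0 \<longrightarrow> y \<noteq> 0 \<longrightarrow> psi (x * y) = ec_add a (psi x) (psi y)) \<and>
     (\<forall>x y. x \<noteq> 0 \<longrightarrow> y \<noteq> 0 \<longrightarrow> (psi x = psi y \<longleftrightarrow> (\<exists>k::int. x = q powi k * y))) \<and>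
     (\<forall>P. on_curve a b P \<longrightarrow> (\<exists>x. x \<noteq> 0 \<and> psi x = P))"

definition tate_normalized :: "real \<Rightarrow> real \<Rightarrow> bool" where
  "tate_normalized q u \<longleftrightarrow>
     (q > 0 \<longrightarrow> q < \<bar>u\<bar> \<and> \<bar>u\<bar> < 1) \<and> (q < 0 \<longrightarrow> q ^ 2 < u \<and> u < 1)"

end

theory Submission
  imports Defs
begin

lemma pow_le_self: "\<bar>x::real\<bar> < 1 \<Longrightarrow> \<bar>x\<bar> ^ Suc m \<le> \<bar>x\<bar>"
  by (simp add: mult_left_le power_le_one)

lemma ua: "0 < \<bar>q\<bar> \<Longrightarrow> \<bar>q\<bar> < 1 \<Longrightarrow> tate_normalized q u \<Longrightarrow> \<bar>u::real\<bar> < 1"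
proof (cases "q > 0")
  case True
  assume "tate_normalized q u" thus ?thesis using True by (simp add: tate_normalized_def)
next
  case False
  assume "0 < \<bar>q\<bar>" "tate_normalized q u"
  hence "q < 0" "q^2 < u" "u < 1" using False by (auto simp: tate_normalized_def)
  moreover have "q^2 \<ge> 0" by simp
  ultimately show ?thesis by linarith
qed

lemma m1: "\<bar>a::real\<bar> < 1 \<Longrightarrow> \<bar>b\<bar> < 1 \<Longrightarrow> \<bar>a * b\<bar> < 1"
proof -
  assume a: "\<bar>a\<bar> < 1" and b: "\<bar>b\<bar> < 1"
  have "\<bar>a\<bar> * \<bar>b\<bar> \<le> \<bar>b\<bar>" using a by (intro mult_left_le_one_le) auto
  thus ?thesis using b by (simp add: abs_mult)
qed

lemma factor_pos:
  fixes q u :: real and m :: nat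
  assumes "0 < \<bar>q\<bar>" "\<bar>q\<bar> < 1" "u \<noteq> 0" "tate_normalized q u"
  shows "(1 - q ^ (Suc m) * u) * (1 - q ^ (Suc m) / u) / (1 - q ^ (Suc m))\<^sup>2 > 0"
proof -
  have qa: "\<bar>q ^ Suc m\<bar> \<le> \<bar>q\<bar>"
    using pow_le_self[of q m] assms(2) by (simp only: power_abs)
  have "\<bar>q ^ Suc m\<bar> < 1" using qa assms by linarith
  hence d: "(1 - q ^ (Suc m))\<^sup>2 > 0" by (simp add: abs_less_iff)
  have ua: "\<bar>u\<bar> < 1" using ua assms by blast
  have "\<bar>q ^ Suc m * u\<bar> < 1"
    using \<open>\<bar>q ^ Suc m\<bar> < 1\<close> ua by (rule m1)
  hence n1: "1 - q ^ (Suc m) * u > 0" by (simp add: abs_less_iff)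
  have n2: "1 - q ^ (Suc m) / u > 0"
  proof (cases "q > 0")
    case True
    with assms have "q < \<bar>u\<bar>" by (simp add: tate_normalized_def)
    show ?thesis
    proof (cases "u > 0")
      case True
      have "q ^ Suc m \<le> q" using qa \<open>q>0\<close> by simp
      hence "q ^ Suc m < u" using \<open>q < \<bar>u\<bar>\<close> True by simp
      thus ?thesis using True by (simp add: field_simps)
    next
      case False
      hence "u < 0" using assms by simp
      have "q ^ Suc m > 0" using \<open>q>0\<close> by simp
      hence "q ^ Suc m / u < 0" using \<open>u<0\<close> by (simp add: divide_pos_neg)
      thus ?thesis by simp
    qed
  next
    case False
    hence "q < 0" using assms by simp
    with assms have uq: "q^2 < u" by (simp add: tate_normalized_def)
    hence up: "u > 0" using zero_le_power2[of q] by linarith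
    show ?thesis
    proof (cases m)
      case 0
      then show ?thesis using \<open>q<0\<close> up by (simp add: divide_neg_pos)
    next
      case (Suc j)
      have "\<bar>q ^ Suc m\<bar> = q^2 * \<bar>q ^ j\<bar>" using Suc by (simp add: abs_mult power2_eq_square)
      also have "\<dots> \<le> q^2" using assms
        by (intro mult_left_le) (simp_all add: power_abs power_le_one)
      finally have "q ^ Suc m < u" using uq by linarith
      thus ?thesis using up by (simp add: field_simps)
    qed
  qed
  show ?thesis using n1 n2 d by simp
qed

lemma feq_gen:
  fixes x u :: real assumes "1 - x \<noteq> 0" "u \<noteq> 0"
  shows "(1 - x * u) * (1 - x / u) / (1 - x)\<^sup>2 = 1 + x * (2 - u - 1/u) / (1 - x)\<^sup>2"
proof -
  have n: "(1 - x * u) * (1 - x / u) = (1 - x)\<^sup>2 + x * (2 - u - 1/u)"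
    using assms(2) by (simp add: field_simps power2_eq_square)
  have "(1 - x)\<^sup>2 \<noteq> 0" using assms by simp
  thus ?thesis unfolding n by (simp add: add_divide_distrib)
qed

lemma theta_pos:
  fixes q u :: real
  assumes "0 < \<bar>q\<bar>" "\<bar>q\<bar> < 1" "u \<noteq> 0" "tate_normalized q u"
  shows "theta u q > 0"
proof -
  define f where "f m = (1 - q ^ (Suc m) * u) * (1 - q ^ (Suc m) / u) / (1 - q ^ (Suc m))\<^sup>2" for m
  define c where "c = 2 - u - 1/u"
  have fpos: "f m > 0" for m unfolding f_def using factor_pos[OF assms] by simp
  have qa: "\<bar>q ^ Suc m\<bar> \<le> \<bar>q\<bar>" for m
    using pow_le_self[of q m] assms(2) by (simp only: power_abs)
  have dn: "1 - q ^ Suc m \<ge> 1 - \<bar>q\<bar>" for m using qa[of m] by linarith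
  have dp: "1 - \<bar>q\<bar> > 0" using assms by simp
  have feq: "f m = 1 + q ^ Suc m * c / (1 - q ^ Suc m)\<^sup>2" for m
  proof -
    have "1 - q ^ Suc m \<noteq> 0" using dn[of m] dp by linarith
    thus ?thesis unfolding f_def c_def using assms(3) by (rule feq_gen)
  qed
  define z where "z m = q ^ Suc m * c / (1 - q ^ Suc m)\<^sup>2" for m
  have zb: "norm \<bar>z m\<bar> \<le> (\<bar>c\<bar> / (1 - \<bar>q\<bar>)\<^sup>2) * \<bar>q\<bar> ^ Suc m" for m
  proof -
    have sq: "(1 - \<bar>q\<bar>)\<^sup>2 \<le> (1 - q ^ Suc m)\<^sup>2"
      using dn[of m] dp by (intro power_mono) auto
    have "norm \<bar>z m\<bar> = \<bar>q\<bar> ^ Suc m * \<bar>c\<bar> / (1 - q ^ Suc m)\<^sup>2"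
      unfolding z_def by (simp add: abs_mult power_abs del: power_Suc)
    also have "\<dots> \<le> \<bar>q\<bar> ^ Suc m * \<bar>c\<bar> / (1 - \<bar>q\<bar>)\<^sup>2"
    proof (rule divide_left_mono)
      have "(1 - \<bar>q\<bar>)\<^sup>2 > 0" using dp by simp
      moreover have "(1 - q ^ Suc m)\<^sup>2 > 0" using sq dp by (smt (verit) zero_less_power2)
      ultimately show "0 < (1 - q ^ Suc m)\<^sup>2 * (1 - \<bar>q\<bar>)\<^sup>2" by simp
    qed (use sq in auto)
    finally show ?thesis by (simp add: mult_ac)
  qed
  have "summable (\<lambda>m. (\<bar>c\<bar> / (1 - \<bar>q\<bar>)\<^sup>2) * \<bar>q\<bar> ^ Suc m)"
    using assms by (intro summable_mult summable_mult) (simp add: summable_geometric summable_mult)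
  hence "summable (\<lambda>m. \<bar>z m\<bar>)"
    by (rule summable_comparison_test'[where N=0]) (use zb in auto)
  moreover have "z m \<noteq> -1" for m using fpos[of m] feq[of m] unfolding z_def by auto
  ultimately have "convergent_prod (\<lambda>m. 1 + z m)" by (rule summable_imp_convergent_prod_real)
  moreover have "f = (\<lambda>m. 1 + z m)" using feq unfolding z_def by (simp add: fun_eq_iff)
  ultimately have cp: "convergent_prod f" by simp
  have "prodinf f > 0"
    using has_prod_pos[OF convergent_prod_has_prod[OF cp] fpos] .
  moreover have "1 - u > 0"
    using assms unfolding tate_normalized_def
    by (cases "q > 0") auto
  ultimately show ?thesis unfolding theta_def f_def by simp
qed

theorem corollary3p2:
  fixes a b q :: real and psi :: "real \<Rightarrow> ec_point"
    and P :: "nat \<Rightarrow> ec_point" and u :: "nat \<Rightarrow> real" and n k :: nat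
  assumes "ec_nonsingular a b"
    and "0 < \<bar>q\<bar>" and "\<bar>q\<bar> < 1"
    and "tate_iso a b q psi"
    and "\<forall>i<n. on_curve a b (P i)"
    and "ec_lin_indep a P n"
    and "\<forall>i<n. u i \<noteq> 0 \<and> tate_normalized q (u i) \<and> psi (u i) = P i"
    and "k \<le> n"
    and "\<forall>i<k. u i < 0"
    and "\<forall>i. k \<le> i \<and> i < n \<longrightarrow> u i > 0"
  shows "\<forall>i<n. theta (u i) q > 0"
  using assms(2,3,7) theta_pos by blast

end
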